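(* Let $J_1,J_2,k_1,k_2,h,E_1,E_2>0$ and $T_s>0$, and consider the batch reactor system $$\dot c_A=-k_1e^{-E_1/T}c_A,\quad \dot c_B=k_1e^{-E_1/T}c_A-k_2e^{-E_2/T}c_B,\quad \dot T=J_1k_1e^{-E_1/T}c_A+J_2k_2e^{-E_2/T}c_B+h(T_s-T),$$ with output $T$, on the state set $D\times\Omega$ where $D=(0,\bar c_A)\times(0,\bar c_B)$, $\Omega=(T_{\min},T_{\max})$, and the constants satisfy $\bar c_A>0$, $0<T_{\min}\le T_s$, $\frac{k_1}{k_2}\bar c_A<\bar c_B$ if $E_1\ge E_2$ and $\frac{k_1}{k_2}e^{(E_2-E_1)/T_{\min}}\bar c_A<\bar c_B$ if $E_1<E_2$, and $\frac{J_1k_1\bar c_A+J_2k_2\bar c_B}{h}+T_s\le T_{\max}$. (Then $D\times\Omega$ is positively invariant and solutions exist and are unique for all $t\ge0$.) Assume one of the following: (A1) if $E_1=E_2$ then $(J_1+J_2)k_2\ne J_1k_1$; if $E_1\ne E_2$ then there exists $a>0$ such that for all $T\in(T_{\min},T_{\max})$ with $\frac{T^2}{(E_2-E_1)J_1h}e^{-E_2/T}\big[(J_1+J_2)k_2-J_1k_1e^{(E_2-E_1)/T}\big]+T>T_s$ one has $\frac{T^2}{(E_2-E_1)J_1}e^{-E_2/T}\big[(J_1+J_2)k_2-J_1k_1e^{(E_2-E_1)/T}\big]\le -a$; (A2) the same as (A1) but with the last inequality replaced by $\frac{T^2}{(E_2-E_1)J_1}e^{-E_2/T}\big[(J_1+J_2)k_2-J_1k_1e^{(E_2-E_1)/T}\big]\ge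 a$. Then the system is strongly observable in time $r$ for every $r>0$ if $E_1=E_2$, and for every $r\ge\frac{T_{\max}-T_{\min}}{a}$ if $E_1\ne E_2$; that is, for any two distinct initial states in $D\times\Omega$, the corresponding temperature outputs $T(\cdot)$ differ at some time in $[0,r]$.
   Context: Strong observability in time $r$ here means: for every pair of initial states $(c_{A,0},c_{B,0},T_0)\neq(\tilde c_{A,0},\tilde c_{B,0},\tilde T_0)$ in $D\times\Omega$, $\max_{t\in[0,r]}|T(t)-\tilde T(t)|>0$, where $T(\cdot),\tilde T(\cdot)$ are the temperature components of the corresponding solutions (the system has no control input). *)

theory Defs
  imports "HOL-Analysis.Analysis"
begin

definition batch_solution ::
  "real \<Rightarrow> real \<Rightarrow> real \<Rightarrow> real \<Rightarrow> real \<Rightarrow> real \<Rightarrow> real \<Rightarrow> real \<Rightarrow> real \<Rightarrow>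
   (real \<Rightarrow> real) \<Rightarrow> (real \<Rightarrow> real) \<Rightarrow> (real \<Rightarrow> real) \<Rightarrow> bool" where
  "batch_solution J1 J2 k1 k2 h E1 E2 Ts r cA cB T \<longleftrightarrow>
     (\<forall>t\<in>{0..r}.
        (cA has_real_derivative (- k1 * exp (- E1 / T t) * cA t)) (at t within {0..r}) \<and>
        (cB has_real_derivative (k1 * exp (- E1 / T t) * cA t - k2 * exp (- E2 / T t) * cB t))
           (at t within {0..r}) \<and>
        (T has_real_derivative (J1 * k1 * exp (- E1 / T t) * cA t + J2 * k2 * exp (- E2 / T t) * cB t
                                 + h * (Ts - T t))) (at t within {0..r}))"

definition reactor_G :: "real \<Rightarrow> real \<Rightarrow> real \<Rightarrow> real \<Rightarrow> real \<Rightarrow> real \<Rightarrow> real \<Rightarrow> real" where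
  "reactor_G J1 J2 k1 k2 E1 E2 \<theta> =
     \<theta>\<^sup>2 / ((E2 - E1) * J1) * exp (- E2 / \<theta>) * ((J1 + J2) * k2 - J1 * k1 * exp ((E2 - E1) / \<theta>))"

end

theory Submission
  imports Defs
begin

lemma mono_lem:
  fixes y y' :: "real \<Rightarrow> real"
  assumes der: "\<forall>t\<in>{0..s}. (y has_real_derivative y' t) (at t within {0..s})"
    and nonpos: "\<forall>t\<in>{0..s}. y' t \<le> 0" and t: "t \<in> {0..s}"
  shows "y t \<le> y 0"
proof -
  have "\<exists>x\<in>{0..t}. y t - y 0 = (\<lambda>h. y' x * h) (t - 0)"
  proof (rule mvt_very_simple)
    show "0 \<le> t" using t by simp
    fix x assume "0 \<le> x" "x \<le> t"
    then have "(y has_real_derivative y' x) (at x within {0..t})"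
    proof -
      have xs: "x \<in> {0..s}" using t \<open>0 \<le> x\<close> \<open>x \<le> t\<close> by simp
      have sub: "{0..t} \<subseteq> {0..s}" using t by simp
      show ?thesis using DERIV_subset[OF der[rule_format, OF xs] sub] .
    qed
    then show "(y has_derivative (\<lambda>h. y' x * h)) (at x within {0..t})"
      by (simp add: has_field_derivative_def)
  qed
  then obtain x where "x \<in> {0..t}" "y t - y 0 = y' x * t" by auto
  moreover have "y' x \<le> 0" using nonpos \<open>x \<in> {0..t}\<close> t by auto
  ultimately show ?thesis using t
    by (metis atLeastAtMost_iff diff_le_0_iff_le mult_nonpos_nonneg)
qed

lemma cmp_le:
  fixes y y' g :: "real \<Rightarrow> real"
  assumes der: "\<forall>t\<in>{0..s}. (y has_real_derivative y' t) (at t within {0..s})"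
    and g: "continuous_on {0..s} g"
    and ineq: "\<forall>t\<in>{0..s}. y' t + g t * y t \<le> 0" and t: "t \<in> {0..s}"
  shows "y t * exp (integral {0..t} g) \<le> y 0"
proof -
  let ?z = "\<lambda>u. y u * exp (integral {0..u} g)"
  have "?z t \<le> ?z 0"
  proof (rule mono_lem[where y' = "\<lambda>u. (y' u + g u * y u) * exp (integral {0..u} g)"])
    show "\<forall>u\<in>{0..s}. (?z has_real_derivative (y' u + g u * y u) * exp (integral {0..u} g)) (at u within {0..s})"
    proof
      fix u assume u: "u \<in> {0..s}"
      have "((\<lambda>x. integral {0..x} g) has_real_derivative g u) (at u within {0..s})"
        using integral_has_real_derivative[OF g u] .
      then have "((\<lambda>x. exp (integral {0..x} g)) has_real_derivative exp (integral {0..u} g) * g u) (at u within {0..s})"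
        by (rule DERIV_chain2[OF DERIV_exp])
      from DERIV_mult[OF der[rule_format, OF u] this]
      show "(?z has_real_derivative (y' u + g u * y u) * exp (integral {0..u} g)) (at u within {0..s})"
        by (simp add: algebra_simps)
    qed
    show "\<forall>u\<in>{0..s}. (y' u + g u * y u) * exp (integral {0..u} g) \<le> 0"
      using ineq by (simp add: mult_nonpos_nonneg)
  qed (use t in auto)
  then show ?thesis by simp
qed

lemma cmp_ge:
  fixes y y' g :: "real \<Rightarrow> real"
  assumes der: "\<forall>t\<in>{0..s}. (y has_real_derivative y' t) (at t within {0..s})"
    and g: "continuous_on {0..s} g"
    and ineq: "\<forall>t\<in>{0..s}. y' t + g t * y t \<ge> 0" and t: "t \<in> {0..s}"
  shows "y t * exp (integral {0..t} g) \<ge> y 0"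
proof -
  have "(- y t) * exp (integral {0..t} g) \<le> - y 0"
    apply (rule cmp_le[where y = "\<lambda>u. - y u" and y' = "\<lambda>u. - y' u", OF _ g _ t])
    using der ineq by (auto intro: DERIV_minus)
  then show ?thesis by simp
qed

lemma arith_low:
  fixes a b c m e :: real
  assumes "(a - c) * e \<ge> b - c" "e \<ge> 1" "b > m" "c \<ge> m"
  shows "a > m"
proof (cases "a - c \<ge> 0")
  case True
  show ?thesis
  proof (cases "a = c")
    case True
    then have "b - c \<le> 0" using assms(1) by simp
    then show ?thesis using assms True by linarith
  next
    case False
    with \<open>a - c \<ge> 0\<close> have "a > c" by simp
    then show ?thesis using assms by linarith
  qed
next
  case False
  then have "(a - c) * e \<le> (a - c)" using assms(2)
    by (simp add: mult_le_cancel_left1)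
  then show ?thesis using assms by linarith
qed

lemma arith_up:
  fixes a b c m e :: real
  assumes "(a - c) * e \<le> b - c" "e \<ge> 1" "b < m" "c \<le> m"
  shows "a < m"
proof -
  have "((- a) - (- c)) * e \<ge> (- b) - (- c)" using assms(1) by (simp add: algebra_simps)
  have "- b > - m" "- c \<ge> - m" using assms(3,4) by simp_all
  from arith_low[OF \<open>((- a) - (- c)) * e \<ge> (- b) - (- c)\<close> assms(2) this] show ?thesis by simp
qed

lemma good:
  fixes J1 J2 k1 k2 h E1 E2 Ts Tmin r s :: real
  assumes pos: "J1 > 0" "J2 > 0" "k1 > 0" "k2 > 0" "h > 0" "E1 > 0" "E2 > 0" "Ts > 0"
    and Tmin: "0 < Tmin" "Tmin \<le> Ts"
    and sol: "batch_solution J1 J2 k1 k2 h E1 E2 Ts r cA cB T"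
    and init: "cA 0 > 0" "cB 0 > 0" "T 0 > Tmin"
    and s: "0 \<le> s" "s \<le> r" and Tp: "\<forall>u\<in>{0..s}. T u > 0"
  shows "\<forall>u\<in>{0..s}. 0 < cA u \<and> cA u \<le> cA 0 \<and> 0 < cB u \<and> T u > Tmin"
proof -
  have sub: "{0..s} \<subseteq> {0..r}" using s by auto
  define \<alpha> where "\<alpha> = (\<lambda>u. k1 * exp (- E1 / T u))"
  define \<beta> where "\<beta> = (\<lambda>u. k2 * exp (- E2 / T u))"
  have D: "(cA has_real_derivative (- \<alpha> t * cA t)) (at t within {0..s}) \<and>
     (cB has_real_derivative (\<alpha> t * cA t - \<beta> t * cB t)) (at t within {0..s}) \<and>
     (T has_real_derivative (J1 * \<alpha> t * cA t + J2 * \<beta> t * cB t + h * (Ts - T t))) (at t within {0..s})"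
    if t: "t \<in> {0..s}" for t
  proof -
    have tr: "t \<in> {0..r}" using t sub by blast
    have e: "(cA has_real_derivative (- k1 * exp (- E1 / T t) * cA t)) (at t within {0..r}) \<and>
        (cB has_real_derivative (k1 * exp (- E1 / T t) * cA t - k2 * exp (- E2 / T t) * cB t))
           (at t within {0..r}) \<and>
        (T has_real_derivative (J1 * k1 * exp (- E1 / T t) * cA t + J2 * k2 * exp (- E2 / T t) * cB t
                                 + h * (Ts - T t))) (at t within {0..r})"
      using sol tr unfolding batch_solution_def by blast
    have e1: "- k1 * exp (- E1 / T t) * cA t = - \<alpha> t * cA t" by (simp add: \<alpha>_def)
    have e3: "J1 * k1 * exp (- E1 / T t) * cA t + J2 * k2 * exp (- E2 / T t) * cB t
                                 + h * (Ts - T t) = J1 * \<alpha> t * cA t + J2 * \<beta> t * cB t + h * (Ts - T t)"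
      by (simp add: \<alpha>_def \<beta>_def mult.assoc)
    have e2: "k1 * exp (- E1 / T t) * cA t - k2 * exp (- E2 / T t) * cB t = \<alpha> t * cA t - \<beta> t * cB t"
      by (simp add: \<alpha>_def \<beta>_def)
    from e have f1: "(cA has_real_derivative (- \<alpha> t * cA t)) (at t within {0..r})"
      and f2: "(cB has_real_derivative (\<alpha> t * cA t - \<beta> t * cB t)) (at t within {0..r})"
      and f3: "(T has_real_derivative (J1 * \<alpha> t * cA t + J2 * \<beta> t * cB t + h * (Ts - T t))) (at t within {0..r})"
      unfolding e1 e2 e3 by auto
    show ?thesis using DERIV_subset[OF f1 sub] DERIV_subset[OF f2 sub] DERIV_subset[OF f3 sub] by simp
  qed
  have dA: "\<forall>t\<in>{0..s}. (cA has_real_derivative (- \<alpha> t * cA t)) (at t within {0..s})"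
    using D by blast
  have dB: "\<forall>t\<in>{0..s}. (cB has_real_derivative (\<alpha> t * cA t - \<beta> t * cB t)) (at t within {0..s})"
    using D by blast
  have dT: "\<forall>t\<in>{0..s}. (T has_real_derivative (J1 * \<alpha> t * cA t + J2 * \<beta> t * cB t + h * (Ts - T t))) (at t within {0..s})"
    using D by blast
  have cT: "continuous_on {0..s} T"
    using dT by (meson DERIV_continuous continuous_on_eq_continuous_within)
  have ca: "continuous_on {0..s} \<alpha>" unfolding \<alpha>_def
    using cT Tp by (intro continuous_intros) auto
  have cb: "continuous_on {0..s} \<beta>" unfolding \<beta>_def
    using cT Tp by (intro continuous_intros) auto
  have apos: "\<alpha> u > 0" for u unfolding \<alpha>_def using pos by simp
  have bpos: "\<beta> u > 0" for u unfolding \<beta>_def using pos by simp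
  have Ige: "integral {0..u} g \<ge> 0" if "u \<in> {0..s}" "continuous_on {0..s} g" "\<And>u. g u > 0" for u and g :: "real \<Rightarrow> real"
  proof -
    have "continuous_on {0..u} g" using that by (auto intro: continuous_on_subset)
    then have "g integrable_on {0..u}" by (rule integrable_continuous_interval)
    then show ?thesis using that(3) by (intro integral_nonneg) (auto intro: less_imp_le)
  qed
  have A1: "\<forall>u\<in>{0..s}. 0 < cA u"
  proof
    fix u assume u: "u \<in> {0..s}"
    have "cA u * exp (integral {0..u} \<alpha>) \<ge> cA 0"
      by (rule cmp_ge[OF dA ca _ u]) simp
    then have "0 < cA u * exp (integral {0..u} \<alpha>)" using init(1) by linarith
    then show "0 < cA u" by (simp add: zero_less_mult_iff)
  qed
  have A2: "\<forall>u\<in>{0..s}. cA u \<le> cA 0"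
  proof
    fix u assume u: "u \<in> {0..s}"
    have "cA u * exp (integral {0..u} \<alpha>) \<le> cA 0"
      by (rule cmp_le[OF dA ca _ u]) simp
    moreover have e1: "exp (integral {0..u} \<alpha>) \<ge> 1" using Ige[OF u ca apos] by simp
    moreover have "cA u \<le> cA u * exp (integral {0..u} \<alpha>)"
    proof -
      have "0 < cA u" using A1 u by blast
      then show ?thesis using e1 by (simp add: mult_le_cancel_left1)
    qed
    ultimately show "cA u \<le> cA 0" by linarith
  qed
  have B1: "\<forall>u\<in>{0..s}. 0 < cB u"
  proof
    fix u assume u: "u \<in> {0..s}"
    have "cB u * exp (integral {0..u} \<beta>) \<ge> cB 0"
    proof (rule cmp_ge[OF dB cb _ u], intro ballI)
      fix t assume t: "t \<in> {0..s}"
      have "0 < cA t" using A1 t by blast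
      then have "0 \<le> \<alpha> t * cA t" using apos[of t] by simp
      then show "0 \<le> \<alpha> t * cA t - \<beta> t * cB t + \<beta> t * cB t" by simp
    qed
    then have "0 < cB u * exp (integral {0..u} \<beta>)" using init(2) by linarith
    then show "0 < cB u" by (simp add: zero_less_mult_iff)
  qed
  have T1: "\<forall>u\<in>{0..s}. T u > Tmin"
  proof
    fix u assume u: "u \<in> {0..s}"
    have dT': "\<forall>t\<in>{0..s}. ((\<lambda>u. T u - Ts) has_real_derivative (J1 * \<alpha> t * cA t + J2 * \<beta> t * cB t + h * (Ts - T t))) (at t within {0..s})"
    proof
      fix t assume t: "t \<in> {0..s}"
      show "((\<lambda>u. T u - Ts) has_real_derivative (J1 * \<alpha> t * cA t + J2 * \<beta> t * cB t + h * (Ts - T t))) (at t within {0..s})"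
        using DERIV_diff[OF dT[rule_format, OF t] DERIV_const[of Ts]] by simp
    qed
    have pT: "0 \<le> J1 * \<alpha> t * cA t + J2 * \<beta> t * cB t + h * (Ts - T t) + h * (T t - Ts)"
      if t: "t \<in> {0..s}" for t
    proof -
      have "0 < J1 * \<alpha> t * cA t + J2 * \<beta> t * cB t"
        using A1 B1 apos bpos pos t by (auto intro!: add_pos_pos mult_pos_pos)
      then show ?thesis by (simp add: algebra_simps)
    qed
    have cst: "continuous_on {0..s} (\<lambda>_. h)" by simp
    have X1: "(T u - Ts) * exp (integral {0..u} (\<lambda>_. h)) \<ge> T 0 - Ts"
      by (rule cmp_ge[OF dT' cst _ u]) (use pT in auto)
    have X2: "exp (integral {0..u} (\<lambda>_. h)) \<ge> 1" using u pos by simp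
    show "T u > Tmin" by (rule arith_low[OF X1 X2 init(3) Tmin(2)])
  qed
  show ?thesis using A1 A2 B1 T1 by simp
qed

lemma sol_contT:
  assumes sol: "batch_solution J1 J2 k1 k2 h E1 E2 Ts r cA cB T"
  shows "continuous_on {0..r} T"
proof -
  have "continuous (at t within {0..r}) T" if "t \<in> {0..r}" for t
    using sol that unfolding batch_solution_def by (meson DERIV_continuous)
  then show ?thesis by (simp add: continuous_on_eq_continuous_within)
qed

lemma Tpos:
  fixes J1 J2 k1 k2 h E1 E2 Ts Tmin r :: real
  assumes pos: "J1 > 0" "J2 > 0" "k1 > 0" "k2 > 0" "h > 0" "E1 > 0" "E2 > 0" "Ts > 0"
    and Tmin: "0 < Tmin" "Tmin \<le> Ts"
    and sol: "batch_solution J1 J2 k1 k2 h E1 E2 Ts r cA cB T"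
    and init: "cA 0 > 0" "cB 0 > 0" "T 0 > Tmin"
  shows "\<forall>t\<in>{0..r}. T t > 0"
proof (rule ccontr)
  assume "\<not> (\<forall>t\<in>{0..r}. T t > 0)"
  then obtain t0 where t0: "t0 \<in> {0..r}" "T t0 \<le> 0" by force
  have cT: "continuous_on {0..r} T" by (rule sol_contT[OF sol])
  define K where "K = {0..r} \<inter> T -` {..0}"
  have Kc: "closed K" unfolding K_def by (rule continuous_closed_preimage[OF cT]) auto
  have Kne: "K \<noteq> {}" using t0 unfolding K_def by auto
  have Kb: "bdd_below K" unfolding K_def by (rule bdd_belowI[of _ 0]) auto
  define s0 where "s0 = Inf K"
  have s0K: "s0 \<in> K" unfolding s0_def by (rule closed_contains_Inf[OF Kne Kb Kc])
  then have s0: "0 \<le> s0" "s0 \<le> r" "T s0 \<le> 0" unfolding K_def by auto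
  have below: "T u > 0" if "u \<in> {0..r}" "u < s0" for u
  proof (rule ccontr)
    assume "\<not> T u > 0"
    then have "u \<in> K" using that unfolding K_def by auto
    then have "s0 \<le> u" unfolding s0_def by (rule cInf_lower[OF _ Kb])
    then show False using that by simp
  qed
  have cT0: "continuous_on {0..s0} T" using cT s0 by (auto intro: continuous_on_subset)
  have "T s0 \<le> Tmin / 2" "Tmin / 2 \<le> T 0" using s0 init Tmin by auto
  from IVT2'[OF this s0(1) cT0] obtain x where x: "0 \<le> x" "x \<le> s0" "T x = Tmin / 2" by blast
  show False
  proof (cases "x < s0")
    case True
    have "\<forall>u\<in>{0..x}. T u > 0" using below True s0 x by auto
    from good[OF pos Tmin sol init x(1) _ this] True s0 have "T x > Tmin" using x by auto
    then show False using x Tmin by simp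
  next
    case False
    then have "x = s0" using x by simp
    then show False using x s0 Tmin by simp
  qed
qed

lemma keyineq:
  fixes k1 k2 E1 E2 Tmin cAbar cBbar \<theta> :: real
  assumes "k1 > 0" "k2 > 0" "E1 > 0" "E2 > 0" "cAbar > 0" "0 < Tmin" "Tmin < \<theta>"
    and cBbar1: "E1 \<ge> E2 \<Longrightarrow> k1 / k2 * cAbar < cBbar"
    and cBbar2: "E1 < E2 \<Longrightarrow> k1 / k2 * exp ((E2 - E1) / Tmin) * cAbar < cBbar"
  shows "k1 * exp (- E1 / \<theta>) * cAbar < k2 * exp (- E2 / \<theta>) * cBbar"
proof -
  have ex: "exp (- E1 / \<theta>) = exp (- E2 / \<theta>) * exp ((E2 - E1) / \<theta>)"
    by (simp add: exp_add[symmetric] diff_divide_distrib)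
  have le: "k1 * exp ((E2 - E1) / \<theta>) * cAbar < k2 * cBbar"
  proof (cases "E1 \<ge> E2")
    case True
    have "(E2 - E1) / \<theta> \<le> 0" using True assms by (simp add: divide_nonpos_pos)
    then have "exp ((E2 - E1) / \<theta>) \<le> 1" by simp
    then have "k1 * exp ((E2 - E1) / \<theta>) * cAbar \<le> k1 * cAbar" using assms by simp
    also have "k1 * cAbar < k2 * cBbar" using cBbar1[OF True] assms by (simp add: field_simps)
    finally show ?thesis .
  next
    case False
    have "(E2 - E1) / \<theta> \<le> (E2 - E1) / Tmin" using False assms
      by (intro divide_left_mono) auto
    then have "exp ((E2 - E1) / \<theta>) \<le> exp ((E2 - E1) / Tmin)" by simp
    then have "k1 * exp ((E2 - E1) / \<theta>) * cAbar \<le> k1 * exp ((E2 - E1) / Tmin) * cAbar" using assms by simp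
    also have "\<dots> < k2 * cBbar" using cBbar2 False assms by (simp add: field_simps)
    finally show ?thesis .
  qed
  have "k1 * exp (- E1 / \<theta>) * cAbar = exp (- E2 / \<theta>) * (k1 * exp ((E2 - E1) / \<theta>) * cAbar)"
    unfolding ex by (simp only: mult_ac)
  also have "\<dots> < exp (- E2 / \<theta>) * (k2 * cBbar)" using le by simp
  finally show ?thesis by (simp add: mult_ac)
qed

lemma sol_D:
  assumes sol: "batch_solution J1 J2 k1 k2 h E1 E2 Ts r cA cB T" and t: "t \<in> {0..r}"
  shows "(cA has_real_derivative (- (k1 * exp (- E1 / T t)) * cA t)) (at t within {0..r}) \<and>
     (cB has_real_derivative ((k1 * exp (- E1 / T t)) * cA t - (k2 * exp (- E2 / T t)) * cB t)) (at t within {0..r}) \<and>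
     (T has_real_derivative (J1 * (k1 * exp (- E1 / T t)) * cA t + J2 * (k2 * exp (- E2 / T t)) * cB t + h * (Ts - T t))) (at t within {0..r})"
proof -
  have e: "(cA has_real_derivative (- k1 * exp (- E1 / T t) * cA t)) (at t within {0..r}) \<and>
        (cB has_real_derivative (k1 * exp (- E1 / T t) * cA t - k2 * exp (- E2 / T t) * cB t))
           (at t within {0..r}) \<and>
        (T has_real_derivative (J1 * k1 * exp (- E1 / T t) * cA t + J2 * k2 * exp (- E2 / T t) * cB t
                                 + h * (Ts - T t))) (at t within {0..r})"
    using sol t unfolding batch_solution_def by blast
  have e1: "- k1 * exp (- E1 / T t) * cA t = - (k1 * exp (- E1 / T t)) * cA t" by simp
  have e3: "J1 * k1 * exp (- E1 / T t) * cA t + J2 * k2 * exp (- E2 / T t) * cB t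
      = J1 * (k1 * exp (- E1 / T t)) * cA t + J2 * (k2 * exp (- E2 / T t)) * cB t"
    by (simp add: mult.assoc)
  show ?thesis using e unfolding e1 e3 by simp
qed

lemma inv:
  fixes J1 J2 k1 k2 h E1 E2 Ts cAbar cBbar Tmin Tmax r :: real
  assumes pos: "J1 > 0" "J2 > 0" "k1 > 0" "k2 > 0" "h > 0" "E1 > 0" "E2 > 0" "Ts > 0"
    and cAbar: "cAbar > 0"
    and Tmin: "0 < Tmin" "Tmin \<le> Ts"
    and cBbar1: "E1 \<ge> E2 \<Longrightarrow> k1 / k2 * cAbar < cBbar"
    and cBbar2: "E1 < E2 \<Longrightarrow> k1 / k2 * exp ((E2 - E1) / Tmin) * cAbar < cBbar"
    and Tmax: "(J1 * k1 * cAbar + J2 * k2 * cBbar) / h + Ts \<le> Tmax"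
    and sol: "batch_solution J1 J2 k1 k2 h E1 E2 Ts r cA cB T"
    and init: "cA 0 \<in> {0<..<cAbar}" "cB 0 \<in> {0<..<cBbar}" "T 0 \<in> {Tmin<..<Tmax}"
    and r: "0 \<le> r"
  shows "\<forall>t\<in>{0..r}. 0 < cA t \<and> cA t < cAbar \<and> 0 < cB t \<and> cB t < cBbar \<and> Tmin < T t \<and> T t < Tmax"
proof -
  have i: "cA 0 > 0" "cB 0 > 0" "T 0 > Tmin" using init by auto
  have Tp: "\<forall>t\<in>{0..r}. T t > 0" by (rule Tpos[OF pos Tmin sol i])
  have G: "\<forall>u\<in>{0..r}. 0 < cA u \<and> cA u \<le> cA 0 \<and> 0 < cB u \<and> T u > Tmin"
    by (rule good[OF pos Tmin sol i r order.refl Tp])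
  define \<alpha> where "\<alpha> = (\<lambda>u. k1 * exp (- E1 / T u))"
  define \<beta> where "\<beta> = (\<lambda>u. k2 * exp (- E2 / T u))"
  have dB: "\<forall>t\<in>{0..r}. (cB has_real_derivative (\<alpha> t * cA t - \<beta> t * cB t)) (at t within {0..r})"
    using sol_D[OF sol] unfolding \<alpha>_def \<beta>_def by blast
  have dT: "\<forall>t\<in>{0..r}. (T has_real_derivative (J1 * \<alpha> t * cA t + J2 * \<beta> t * cB t + h * (Ts - T t))) (at t within {0..r})"
    using sol_D[OF sol] unfolding \<alpha>_def \<beta>_def by blast
  have cT: "continuous_on {0..r} T" by (rule sol_contT[OF sol])
  have cb: "continuous_on {0..r} \<beta>" unfolding \<beta>_def
    using cT Tp by (intro continuous_intros) auto
  have apos: "\<alpha> u > 0" for u unfolding \<alpha>_def using pos by simp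
  have bpos: "\<beta> u > 0" for u unfolding \<beta>_def using pos by simp
  have B2: "cB u < cBbar" if u: "u \<in> {0..r}" for u
  proof -
    have dB': "\<forall>t\<in>{0..r}. ((\<lambda>u. cB u - cBbar) has_real_derivative (\<alpha> t * cA t - \<beta> t * cB t)) (at t within {0..r})"
    proof
      fix t assume t: "t \<in> {0..r}"
      show "((\<lambda>u. cB u - cBbar) has_real_derivative (\<alpha> t * cA t - \<beta> t * cB t)) (at t within {0..r})"
        using DERIV_diff[OF dB[rule_format, OF t] DERIV_const[of cBbar]] by simp
    qed
    have ineq: "\<forall>t\<in>{0..r}. \<alpha> t * cA t - \<beta> t * cB t + \<beta> t * (cB t - cBbar) \<le> 0"
    proof
      fix t assume t: "t \<in> {0..r}"
      have "cA t \<le> cA 0" "Tmin < T t" using G t by auto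
      then have "cA t \<le> cAbar" using init by auto
      then have "\<alpha> t * cA t \<le> \<alpha> t * cAbar" using apos[of t] by simp
      also have "\<alpha> t * cAbar < \<beta> t * cBbar" unfolding \<alpha>_def \<beta>_def
        by (rule keyineq[OF pos(3,4,6,7) cAbar Tmin(1) \<open>Tmin < T t\<close> cBbar1 cBbar2])
      finally show "\<alpha> t * cA t - \<beta> t * cB t + \<beta> t * (cB t - cBbar) \<le> 0"
        by (simp add: algebra_simps)
    qed
    have "(cB u - cBbar) * exp (integral {0..u} \<beta>) \<le> cB 0 - cBbar"
      by (rule cmp_le[OF dB' cb ineq u])
    also have "\<dots> < 0" using init by simp
    finally show ?thesis by (simp add: mult_less_0_iff)
  qed
  have T2: "T u < Tmax" if u: "u \<in> {0..r}" for u
  proof -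
    define M where "M = (J1 * k1 * cAbar + J2 * k2 * cBbar) / h + Ts"
    have hM: "h * M = J1 * k1 * cAbar + J2 * k2 * cBbar + h * Ts"
      unfolding M_def using pos by (simp add: field_simps)
    have dT': "\<forall>t\<in>{0..r}. ((\<lambda>u. T u - M) has_real_derivative (J1 * \<alpha> t * cA t + J2 * \<beta> t * cB t + h * (Ts - T t))) (at t within {0..r})"
    proof
      fix t assume t: "t \<in> {0..r}"
      show "((\<lambda>u. T u - M) has_real_derivative (J1 * \<alpha> t * cA t + J2 * \<beta> t * cB t + h * (Ts - T t))) (at t within {0..r})"
        using DERIV_diff[OF dT[rule_format, OF t] DERIV_const[of M]] by simp
    qed
    have ineq: "J1 * \<alpha> t * cA t + J2 * \<beta> t * cB t + h * (Ts - T t) + h * (T t - M) \<le> 0"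
      if t: "t \<in> {0..r}" for t
    proof -
      have c: "0 < cA t" "cA t \<le> cA 0" "0 < cB t" using G t by auto
      have "T t > 0" using Tp t by auto
      then have ea: "exp (- E1 / T t) \<le> 1" and eb: "exp (- E2 / T t) \<le> 1" using pos by auto
      have "\<alpha> t \<le> k1" unfolding \<alpha>_def using ea pos by simp
      moreover have "cA t \<le> cAbar" using c init by auto
      ultimately have "\<alpha> t * cA t \<le> k1 * cAbar" using c apos[of t]
        by (intro mult_mono) auto
      then have a1: "J1 * \<alpha> t * cA t \<le> J1 * k1 * cAbar" using pos
        by (simp add: mult.assoc)
      have "\<beta> t \<le> k2" unfolding \<beta>_def using eb pos by simp
      moreover have "cB t \<le> cBbar" using B2 t by (simp add: less_imp_le)
      ultimately have "\<beta> t * cB t \<le> k2 * cBbar" using c bpos[of t]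
        by (intro mult_mono) auto
      then have a2: "J2 * \<beta> t * cB t \<le> J2 * k2 * cBbar" using pos
        by (simp add: mult.assoc)
      have "J1 * \<alpha> t * cA t + J2 * \<beta> t * cB t + h * (Ts - T t) + h * (T t - M)
          = J1 * \<alpha> t * cA t + J2 * \<beta> t * cB t - (J1 * k1 * cAbar + J2 * k2 * cBbar)"
        using hM by (simp add: algebra_simps)
      then show ?thesis using a1 a2 by linarith
    qed
    have cst: "continuous_on {0..r} (\<lambda>_. h)" by simp
    have X1: "(T u - M) * exp (integral {0..u} (\<lambda>_. h)) \<le> T 0 - M"
      by (rule cmp_le[OF dT' cst _ u]) (use ineq in auto)
    have X2: "exp (integral {0..u} (\<lambda>_. h)) \<ge> 1" using u pos by simp
    have X3: "T 0 < Tmax" using init by simp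
    have X4: "M \<le> Tmax" using Tmax unfolding M_def .
    show ?thesis by (rule arith_up[OF X1 X2 X3 X4])
  qed
  show ?thesis
  proof
    fix t assume t: "t \<in> {0..r}"
    show "0 < cA t \<and> cA t < cAbar \<and> 0 < cB t \<and> cB t < cBbar \<and> Tmin < T t \<and> T t < Tmax"
      using G t B2[OF t] T2[OF t] init by fastforce
  qed
qed

lemma DERIV_tr:
  assumes "(f has_real_derivative D) (at x within s)" "x \<in> s" "\<forall>y\<in>s. f y = g y"
  shows "(g has_real_derivative D) (at x within s)"
proof -
  have d: "(f has_derivative (*) D) (at x within s)" using assms(1) unfolding has_field_derivative_def .
  have e: "\<And>y. y \<in> s \<Longrightarrow> g y = f y" using assms(3) by simp
  show ?thesis unfolding has_field_derivative_def by (rule has_derivative_transform[OF assms(2) e d])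
qed

lemma nb:
  fixes r t :: real
  assumes "0 < r" "t \<in> {0..r}"
  shows "at t within {0..r} \<noteq> bot"
proof -
  have "t islimpt {0..r}" using islimpt_Icc[OF assms(1)] assms(2) by blast
  then show ?thesis using trivial_limit_within[of t "{0..r}"] by simp
qed

lemma alg1:
  fixes J1 J2 k1 k2 e x y :: real
  assumes e1: "J1*k1*x + J2*k2*y = 0"
    and e2: "J1*k1*(-(k1*e)*x) + J2*k2*((k1*e)*x - (k2*e)*y) = 0"
    and p: "e > 0" "k1 > 0" "k2 > 0" "J2 > 0" and nq: "(J1+J2)*k2 \<noteq> J1*k1"
  shows "x = 0 \<and> y = 0"
proof -
  have "e*k1*x*((J1+J2)*k2 - J1*k1) = J1*k1*(-(k1*e)*x) + J2*k2*((k1*e)*x - (k2*e)*y) + e*k2*(J1*k1*x + J2*k2*y)"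
    by (simp add: algebra_simps)
  also have "\<dots> = 0" using e1 e2 by simp
  finally have z: "e*k1*x*((J1+J2)*k2 - J1*k1) = 0" .
  have "(J1+J2)*k2 - J1*k1 \<noteq> 0" using nq by simp
  then have "x = 0" using z p by simp
  then show ?thesis using e1 p by simp
qed

lemma alg2:
  fixes J1 J2 E1 E2 a b x y D \<theta> :: real
  assumes e1: "J1 * (a * x) + J2 * (b * y) = 0"
    and e2: "J1 * (a * (E1 * D / \<theta>^2) * x + (- a * x) * a) + J2 * (b * (E2 * D / \<theta>^2) * y + (a * x - b * y) * b) = 0"
    and nz: "a \<noteq> 0" "x \<noteq> 0" "\<theta> \<noteq> 0" "E1 \<noteq> E2" "J1 \<noteq> 0"
  shows "D = \<theta>^2 / ((E2 - E1) * J1) * ((J1 + J2) * b - J1 * a)"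
proof -
  have idq: "a*x*(J1*(E1-E2)*q - J1*a + (J1+J2)*b)
     = (J1 * (a * (E1 * q) * x + (- a * x) * a) + J2 * (b * (E2 * q) * y + (a * x - b * y) * b))
       - (E2*q - b) * (J1 * (a * x) + J2 * (b * y))" for q
    by (simp add: algebra_simps)
  have "a*x*(J1*(E1-E2)*D/\<theta>^2 - J1*a + (J1+J2)*b)
     = (J1 * (a * (E1 * D / \<theta>^2) * x + (- a * x) * a) + J2 * (b * (E2 * D / \<theta>^2) * y + (a * x - b * y) * b))
       - (E2*D/\<theta>^2 - b) * (J1 * (a * x) + J2 * (b * y))"
    using idq[of "D/\<theta>^2"] by (simp add: mult.assoc)
  also have "\<dots> = 0" using e1 e2 by simp
  finally have "J1*(E1-E2)*D/\<theta>^2 - J1*a + (J1+J2)*b = 0" using nz by simp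
  then have "J1*(E1-E2)*D/\<theta>^2 = J1*a - (J1+J2)*b" by simp
  then have "J1*(E1-E2)*D = \<theta>^2 * (J1*a - (J1+J2)*b)" using nz by (simp add: field_simps)
  then have "D = \<theta>^2 * (J1*a - (J1+J2)*b) / (J1*(E1-E2))" using nz by (simp add: field_simps)
  also have "\<dots> = \<theta>^2 / ((E2 - E1) * J1) * ((J1 + J2) * b - J1 * a)" using nz
    by (simp add: field_simps)
  finally show ?thesis .
qed

lemma deriv_arr:
  fixes T :: "real \<Rightarrow> real"
  assumes d: "(T has_real_derivative D) (at t within S)" and nz: "T t \<noteq> 0"
  shows "((\<lambda>u. k * exp (- E / T u)) has_real_derivative (k * exp (- E / T t)) * (E * D / T t ^ 2)) (at t within S)"
proof -
  have "((\<lambda>u. k * exp (- E * inverse (T u))) has_real_derivative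
      k * (exp (- E * inverse (T t)) * (- E * (- (D * inverse (T t ^ Suc (Suc 0))))))) (at t within S)"
    by (intro DERIV_cmult DERIV_chain2[OF DERIV_exp] DERIV_inverse_fun[OF d nz])
  moreover have "(\<lambda>u. k * exp (- E * inverse (T u))) = (\<lambda>u. k * exp (- E / T u))"
    by (simp add: divide_inverse)
  moreover have "k * (exp (- E * inverse (T t)) * (- E * (- (D * inverse (T t ^ Suc (Suc 0))))))
      = (k * exp (- E / T t)) * (E * D / T t ^ 2)"
    by (simp add: divide_inverse power2_eq_square)
  ultimately show ?thesis by simp
qed

lemma Gform:
  fixes \<theta> :: real
  assumes "\<theta> \<noteq> 0"
  shows "reactor_G J1 J2 k1 k2 E1 E2 \<theta> = \<theta>^2 / ((E2 - E1) * J1) * ((J1 + J2) * (k2 * exp (- E2 / \<theta>)) - J1 * (k1 * exp (- E1 / \<theta>)))"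
proof -
  have ex: "exp (- E2 / \<theta>) * exp ((E2 - E1) / \<theta>) = exp (- E1 / \<theta>)"
    by (simp add: exp_add[symmetric] diff_divide_distrib)
  have "exp (- E2 / \<theta>) * ((J1 + J2) * k2 - J1 * k1 * exp ((E2 - E1) / \<theta>))
      = (J1 + J2) * (k2 * exp (- E2 / \<theta>)) - J1 * k1 * (exp (- E2 / \<theta>) * exp ((E2 - E1) / \<theta>))"
    by (simp add: algebra_simps)
  also have "\<dots> = (J1 + J2) * (k2 * exp (- E2 / \<theta>)) - J1 * (k1 * exp (- E1 / \<theta>))"
    unfolding ex by (simp add: mult.assoc)
  finally have q: "exp (- E2 / \<theta>) * ((J1 + J2) * k2 - J1 * k1 * exp ((E2 - E1) / \<theta>))
      = (J1 + J2) * (k2 * exp (- E2 / \<theta>)) - J1 * (k1 * exp (- E1 / \<theta>))" .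
  have "reactor_G J1 J2 k1 k2 E1 E2 \<theta> = \<theta>^2 / ((E2 - E1) * J1) * (exp (- E2 / \<theta>) * ((J1 + J2) * k2 - J1 * k1 * exp ((E2 - E1) / \<theta>)))"
    unfolding reactor_G_def by (simp only: mult.assoc)
  also have "\<dots> = \<theta>^2 / ((E2 - E1) * J1) * ((J1 + J2) * (k2 * exp (- E2 / \<theta>)) - J1 * (k1 * exp (- E1 / \<theta>)))"
    unfolding q ..
  finally show ?thesis .
qed

theorem mainTheorem5:
  fixes J1 J2 k1 k2 h E1 E2 Ts cAbar cBbar Tmin Tmax a r :: real
  assumes pos: "J1 > 0" "J2 > 0" "k1 > 0" "k2 > 0" "h > 0" "E1 > 0" "E2 > 0" "Ts > 0"
    and cAbar: "cAbar > 0"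
    and Tmin: "0 < Tmin" "Tmin \<le> Ts"
    and cBbar1: "E1 \<ge> E2 \<Longrightarrow> k1 / k2 * cAbar < cBbar"
    and cBbar2: "E1 < E2 \<Longrightarrow> k1 / k2 * exp ((E2 - E1) / Tmin) * cAbar < cBbar"
    and Tmax: "(J1 * k1 * cAbar + J2 * k2 * cBbar) / h + Ts \<le> Tmax"
    and hyp: "if E1 = E2 then (J1 + J2) * k2 \<noteq> J1 * k1
              else a > 0 \<and>
                ((\<forall>\<theta>\<in>{Tmin<..<Tmax}.
                    reactor_G J1 J2 k1 k2 E1 E2 \<theta> / h + \<theta> > Ts \<longrightarrow> reactor_G J1 J2 k1 k2 E1 E2 \<theta> \<le> - a)
                 \<or> (\<forall>\<theta>\<in>{Tmin<..<Tmax}.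
                    reactor_G J1 J2 k1 k2 E1 E2 \<theta> / h + \<theta> > Ts \<longrightarrow> reactor_G J1 J2 k1 k2 E1 E2 \<theta> \<ge> a))"
    and hr: "if E1 = E2 then r > 0 else r \<ge> (Tmax - Tmin) / a"
    and sol1: "batch_solution J1 J2 k1 k2 h E1 E2 Ts r cA cB T"
    and sol2: "batch_solution J1 J2 k1 k2 h E1 E2 Ts r cA' cB' T'"
    and init1: "cA 0 \<in> {0<..<cAbar}" "cB 0 \<in> {0<..<cBbar}" "T 0 \<in> {Tmin<..<Tmax}"
    and init2: "cA' 0 \<in> {0<..<cAbar}" "cB' 0 \<in> {0<..<cBbar}" "T' 0 \<in> {Tmin<..<Tmax}"
    and distinct: "(cA 0, cB 0, T 0) \<noteq> (cA' 0, cB' 0, T' 0)"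
  shows "\<exists>t\<in>{0..r}. T t \<noteq> T' t"
proof (rule ccontr)
  assume "\<not> (\<exists>t\<in>{0..r}. T t \<noteq> T' t)"
  then have eqT: "\<forall>t\<in>{0..r}. T t = T' t" by blast
  have TminTmax: "Tmin < Tmax" using init1(3) by simp
  have rpos: "r > 0"
  proof (cases "E1 = E2")
    case True then show ?thesis using hr by simp
  next
    case False
    then have "a > 0" using hyp by simp
    then have "(Tmax - Tmin) / a > 0" using TminTmax by simp
    then show ?thesis using hr False by simp
  qed
  have r0: "0 \<in> {0..r}" using rpos by simp
  have nbot: "at t within {0..r} \<noteq> bot" if "t \<in> {0..r}" for t using nb[OF rpos that] .
  define \<alpha> where "\<alpha> = (\<lambda>u. k1 * exp (- E1 / T u))"
  define \<beta> where "\<beta> = (\<lambda>u. k2 * exp (- E2 / T u))"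
  define x where "x = (\<lambda>u. cA u - cA' u)"
  define y where "y = (\<lambda>u. cB u - cB' u)"
  have apos: "\<alpha> u > 0" for u unfolding \<alpha>_def using pos by simp
  have bpos: "\<beta> u > 0" for u unfolding \<beta>_def using pos by simp
  have DD: "(cA has_real_derivative (- \<alpha> t * cA t)) (at t within {0..r}) \<and>
       (cB has_real_derivative (\<alpha> t * cA t - \<beta> t * cB t)) (at t within {0..r}) \<and>
       (T has_real_derivative (J1 * \<alpha> t * cA t + J2 * \<beta> t * cB t + h * (Ts - T t))) (at t within {0..r}) \<and>
       (cA' has_real_derivative (- \<alpha> t * cA' t)) (at t within {0..r}) \<and>
       (cB' has_real_derivative (\<alpha> t * cA' t - \<beta> t * cB' t)) (at t within {0..r}) \<and>
       (T has_real_derivative (J1 * \<alpha> t * cA' t + J2 * \<beta> t * cB' t + h * (Ts - T t))) (at t within {0..r})"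
    if t: "t \<in> {0..r}" for t
  proof -
    have tt: "T' t = T t" using eqT t by simp
    note s1 = sol_D[OF sol1 t]
    note s2 = sol_D[OF sol2 t, unfolded tt]
    have T2: "(T has_real_derivative (J1 * (k1 * exp (- E1 / T t)) * cA' t + J2 * (k2 * exp (- E2 / T t)) * cB' t + h * (Ts - T t))) (at t within {0..r})"
      by (rule DERIV_tr[OF conjunct2[OF conjunct2[OF s2]] t]) (use eqT in auto)
    show ?thesis unfolding \<alpha>_def \<beta>_def using s1 s2 T2 by auto
  qed
  have psi0: "J1 * (\<alpha> t * x t) + J2 * (\<beta> t * y t) = 0" if t: "t \<in> {0..r}" for t
  proof -
    have "J1 * \<alpha> t * cA t + J2 * \<beta> t * cB t + h * (Ts - T t) = J1 * \<alpha> t * cA' t + J2 * \<beta> t * cB' t + h * (Ts - T t)"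
      using DD[OF t] nbot[OF t] by (meson has_field_derivative_unique)
    then show ?thesis unfolding x_def y_def by (simp add: algebra_simps)
  qed
  have x0: "x 0 \<noteq> 0"
  proof
    assume x0: "x 0 = 0"
    have "J2 * (\<beta> 0 * y 0) = 0" using psi0[OF r0] x0 by simp
    then have "y 0 = 0" using pos bpos[of 0] by simp
    then show False using distinct x0 eqT r0 unfolding x_def y_def by simp
  qed
  show False
  proof (cases "E1 = E2")
    case True
    have hyp1: "(J1 + J2) * k2 \<noteq> J1 * k1" using hyp True by simp
    define \<phi> where "\<phi> = (\<lambda>u. J1 * k1 * (cA u - cA' u) + J2 * k2 * (cB u - cB' u))"
    have phi0: "\<forall>u\<in>{0..r}. \<phi> u = 0"
    proof
      fix u assume u: "u \<in> {0..r}"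
      have "J1 * (\<alpha> u * x u) + J2 * (\<beta> u * y u) = exp (- E1 / T u) * \<phi> u"
        unfolding \<alpha>_def \<beta>_def \<phi>_def x_def y_def True by (simp add: algebra_simps)
      then show "\<phi> u = 0" using psi0[OF u] by simp
    qed
    have dphi: "(\<phi> has_real_derivative J1 * k1 * (- \<alpha> 0 * cA 0 - - \<alpha> 0 * cA' 0) + J2 * k2 * ((\<alpha> 0 * cA 0 - \<beta> 0 * cB 0) - (\<alpha> 0 * cA' 0 - \<beta> 0 * cB' 0))) (at 0 within {0..r})"
      unfolding \<phi>_def using DD[OF r0] by (intro DERIV_add DERIV_cmult DERIV_diff) auto
    have dz: "(\<phi> has_real_derivative 0) (at 0 within {0..r})"
      by (rule DERIV_tr[OF DERIV_const r0]) (use phi0 in auto)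
    have eqd: "J1 * k1 * (- \<alpha> 0 * cA 0 - - \<alpha> 0 * cA' 0) + J2 * k2 * ((\<alpha> 0 * cA 0 - \<beta> 0 * cB 0) - (\<alpha> 0 * cA' 0 - \<beta> 0 * cB' 0)) = 0"
      by (rule has_field_derivative_unique[OF dphi dz nbot[OF r0]])
    define e where "e = exp (- E1 / T 0)"
    have ae: "\<alpha> 0 = k1 * e" "\<beta> 0 = k2 * e" unfolding \<alpha>_def \<beta>_def e_def True by simp_all
    have E1: "J1*k1*x 0 + J2*k2*y 0 = 0" using phi0 r0 unfolding \<phi>_def x_def y_def by simp
    have E2: "J1*k1*(-(k1*e)*x 0) + J2*k2*((k1*e)*x 0 - (k2*e)*y 0) = 0"
      using eqd unfolding ae x_def y_def by (simp add: algebra_simps)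
    have "x 0 = 0 \<and> y 0 = 0"
      by (rule alg1[OF E1 E2 _ pos(3) pos(4) pos(2) hyp1]) (simp add: e_def)
    then show False using x0 by simp
  next
    case False
    have hyp2: "a > 0 \<and>
                ((\<forall>\<theta>\<in>{Tmin<..<Tmax}.
                    reactor_G J1 J2 k1 k2 E1 E2 \<theta> / h + \<theta> > Ts \<longrightarrow> reactor_G J1 J2 k1 k2 E1 E2 \<theta> \<le> - a)
                 \<or> (\<forall>\<theta>\<in>{Tmin<..<Tmax}.
                    reactor_G J1 J2 k1 k2 E1 E2 \<theta> / h + \<theta> > Ts \<longrightarrow> reactor_G J1 J2 k1 k2 E1 E2 \<theta> \<ge> a))"
      using hyp False by simp
    have hr2: "r \<ge> (Tmax - Tmin) / a" using hr False by simp
    have INV: "\<forall>t\<in>{0..r}. 0 < cA t \<and> cA t < cAbar \<and> 0 < cB t \<and> cB t < cBbar \<and> Tmin < T t \<and> T t < Tmax"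
      by (rule inv[OF pos cAbar Tmin cBbar1 cBbar2 Tmax sol1 init1 less_imp_le[OF rpos]])
    have Tnz: "T t \<noteq> 0" if "t \<in> {0..r}" for t using INV that Tmin by force
    have cT: "continuous_on {0..r} T" by (rule sol_contT[OF sol1])
    have ca: "continuous_on {0..r} \<alpha>" unfolding \<alpha>_def
      using cT Tnz by (intro continuous_intros) auto
    have dx: "\<forall>t\<in>{0..r}. (x has_real_derivative (- \<alpha> t * x t)) (at t within {0..r})"
    proof
      fix t assume t: "t \<in> {0..r}"
      have "(x has_real_derivative (- \<alpha> t * cA t - - \<alpha> t * cA' t)) (at t within {0..r})"
        unfolding x_def using DD[OF t] by (intro DERIV_diff) auto
      then show "(x has_real_derivative (- \<alpha> t * x t)) (at t within {0..r})"
        unfolding x_def by (simp add: algebra_simps)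
    qed
    have dy: "(y has_real_derivative (\<alpha> t * x t - \<beta> t * y t)) (at t within {0..r})" if t: "t \<in> {0..r}" for t
    proof -
      have "(y has_real_derivative ((\<alpha> t * cA t - \<beta> t * cB t) - (\<alpha> t * cA' t - \<beta> t * cB' t))) (at t within {0..r})"
        unfolding y_def using DD[OF t] by (intro DERIV_diff) auto
      then show ?thesis unfolding x_def y_def by (simp add: algebra_simps)
    qed
    have xnz: "x t \<noteq> 0" if t: "t \<in> {0..r}" for t
    proof -
      have "x t * exp (integral {0..t} \<alpha>) \<le> x 0" by (rule cmp_le[OF dx ca _ t]) simp
      moreover have "x t * exp (integral {0..t} \<alpha>) \<ge> x 0" by (rule cmp_ge[OF dx ca _ t]) simp
      ultimately have "x t * exp (integral {0..t} \<alpha>) = x 0" by simp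
      then show ?thesis using x0 by auto
    qed
    define D where "D = (\<lambda>t. J1 * \<alpha> t * cA t + J2 * \<beta> t * cB t + h * (Ts - T t))"
    have DG: "D t = reactor_G J1 J2 k1 k2 E1 E2 (T t)" if t: "t \<in> {0..r}" for t
    proof -
      have dT: "(T has_real_derivative D t) (at t within {0..r})" unfolding D_def using DD[OF t] by simp
      have da: "(\<alpha> has_real_derivative \<alpha> t * (E1 * D t / T t ^ 2)) (at t within {0..r})"
        unfolding \<alpha>_def by (rule deriv_arr[OF dT Tnz[OF t]])
      have db: "(\<beta> has_real_derivative \<beta> t * (E2 * D t / T t ^ 2)) (at t within {0..r})"
        unfolding \<beta>_def by (rule deriv_arr[OF dT Tnz[OF t]])
      have dpsi: "((\<lambda>u. J1 * (\<alpha> u * x u) + J2 * (\<beta> u * y u)) has_real_derivative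
          J1 * (\<alpha> t * (E1 * D t / T t ^ 2) * x t + (- \<alpha> t * x t) * \<alpha> t) + J2 * (\<beta> t * (E2 * D t / T t ^ 2) * y t + (\<alpha> t * x t - \<beta> t * y t) * \<beta> t))
          (at t within {0..r})"
        by (intro DERIV_add DERIV_cmult DERIV_mult da db dy[OF t] dx[rule_format, OF t])
      have dz: "((\<lambda>u. J1 * (\<alpha> u * x u) + J2 * (\<beta> u * y u)) has_real_derivative 0) (at t within {0..r})"
        by (rule DERIV_tr[OF DERIV_const t]) (use psi0 in auto)
      have e2: "J1 * (\<alpha> t * (E1 * D t / T t ^ 2) * x t + (- \<alpha> t * x t) * \<alpha> t) + J2 * (\<beta> t * (E2 * D t / T t ^ 2) * y t + (\<alpha> t * x t - \<beta> t * y t) * \<beta> t) = 0"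
        by (rule has_field_derivative_unique[OF dpsi dz nbot[OF t]])
      have "D t = (T t)^2 / ((E2 - E1) * J1) * ((J1 + J2) * \<beta> t - J1 * \<alpha> t)"
        by (rule alg2[OF psi0[OF t] e2]) (use apos[of t] xnz[OF t] Tnz[OF t] False pos in auto)
      also have "\<dots> = reactor_G J1 J2 k1 k2 E1 E2 (T t)"
        unfolding Gform[OF Tnz[OF t]] \<alpha>_def \<beta>_def ..
      finally show ?thesis .
    qed
    have cond: "reactor_G J1 J2 k1 k2 E1 E2 (T t) / h + T t > Ts" and Tin: "T t \<in> {Tmin<..<Tmax}"
      if t: "t \<in> {0..r}" for t
    proof -
      have c: "0 < cA t" "0 < cB t" "Tmin < T t" "T t < Tmax" using INV t by auto
      have "0 < J1 * \<alpha> t * cA t + J2 * \<beta> t * cB t"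
        using c apos[of t] bpos[of t] pos by (auto intro!: add_pos_pos mult_pos_pos)
      then have "h * (Ts - T t) < D t" unfolding D_def by simp
      then have "Ts - T t < D t / h" using pos by (simp add: pos_less_divide_eq mult.commute)
      then show "reactor_G J1 J2 k1 k2 E1 E2 (T t) / h + T t > Ts" using DG[OF t] by simp
      show "T t \<in> {Tmin<..<Tmax}" using c by simp
    qed
    have dT: "\<forall>t\<in>{0..r}. (T has_real_derivative D t) (at t within {0..r})" unfolding D_def using DD by blast
    have ar: "Tmax - Tmin \<le> r * a" using hr2 hyp2 by (simp add: pos_divide_le_eq)
    have rr: "r \<in> {0..r}" using rpos by simp
    have Tr: "Tmin < T r" "T r < Tmax" using INV rr by auto
    have T0: "T 0 < Tmax" "Tmin < T 0" using init1 by auto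
    from hyp2 have "(\<forall>t\<in>{0..r}. D t \<le> - a) \<or> (\<forall>t\<in>{0..r}. D t \<ge> a)"
      using cond Tin DG by fastforce
    then show False
    proof
      assume B: "\<forall>t\<in>{0..r}. D t \<le> - a"
      have dd: "\<forall>t\<in>{0..r}. ((\<lambda>u. T u + a * u) has_real_derivative D t + a * 1) (at t within {0..r})"
        using dT by (auto intro!: DERIV_add DERIV_cmult DERIV_ident)
      have "T r + a * r \<le> T 0 + a * 0"
        by (rule mono_lem[OF dd _ rr]) (use B in auto)
      then show False using ar Tr T0 by (simp add: algebra_simps)
    next
      assume B: "\<forall>t\<in>{0..r}. D t \<ge> a"
      have dd: "\<forall>t\<in>{0..r}. ((\<lambda>u. a * u - T u) has_real_derivative a * 1 - D t) (at t within {0..r})"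
        using dT by (auto intro!: DERIV_diff DERIV_cmult DERIV_ident)
      have "a * r - T r \<le> a * 0 - T 0"
        by (rule mono_lem[OF dd _ rr]) (use B in auto)
      then show False using ar Tr T0 by (simp add: algebra_simps)
    qed
  qed
qed

end
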